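(* Let $V$ be a filled sparsity pattern, $X\in\mathbb S^n_V$ positive definite and $Y\in\mathbb S^n_V$. For $t$ in a neighborhood of $0$ let $X+tY=L(t)D(t)L(t)^T$ be the factorization with $L(t)$ unit lower triangular and $D(t)$ positive diagonal, and for each vertex $i$ let $U_i(t)=-\sum_{k\in T_i}D_{kk}(t)L_{I_ik}(t)L_{I_ik}(t)^T$. Write $L=L(0)$, $D=D(0)$ and $L',D',U_i'$ for the derivatives at $t=0$. Then for every $j$, $$\begin{bmatrix}Y_{jj}&Y_{I_j j}^T\\ Y_{I_j j}&0\end{bmatrix}+\sum_{i\in\mathrm{ch}(j)}E_{I_j^+I_i}U_i'E_{I_j^+I_i}^T=\begin{bmatrix}1&0\\ L_{I_j j}&I\end{bmatrix}\begin{bmatrix}D_{jj}'&D_{jj}(L'_{I_j j})^T\\ D_{jj}L'_{I_j j}&U_j'\end{bmatrix}\begin{bmatrix}1&L_{I_j j}^T\\0&I\end{bmatrix}.$$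
   Context: A symmetric sparsity pattern $V$ is a set of pairs $(i,j)$ with $1\le j\le i\le n$ containing all $(i,i)$; it is filled (chordal) if $i>j>k$, $(i,k)\in V$, $(j,k)\in V$ imply $(i,j)\in V$. $\mathbb S^n_V$ is the set of real symmetric $n\times n$ matrices with $X_{ij}=X_{ji}=0$ whenever $i\ge j$ and $(i,j)\notin V$. For each $j$, $I_j=\{i>j:(i,j)\in V\}$, $I_j^+=\{j\}\cup I_j$. Elimination tree: the parent of $j$ is $\min I_j$ if $I_j\neq\emptyset$; $\mathrm{ch}(j)$ is the set of children of $j$ and $T_i$ the set consisting of $i$ and its descendants. It is known that $I_i\subseteq I_j^+$ for $i\in\mathrm{ch}(j)$ and that the Cholesky factor of a positive definite matrix in $\mathbb S^n_V$ has no nonzeros outside $V$. Index sets are sorted increasingly, $I(a)$ being the $a$-th element; for $J\subseteq I$, $E_{IJ}$ is the $|I|\times|J|$ matrix with $(E_{IJ})_{ab}=1$ iff $I(a)=J(b)$, else $0$. $A_{IJ}$ is the submatrix with rows $I$ and columns $J$; $A_{Ij}$ the part of column $j$ with rows in $I$. *)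

theory Defs
  imports "HOL-Analysis.Analysis" "Jordan_Normal_Form.Matrix"
begin

text \<open>Indices are 0-based: the vertices are 0,...,n-1 (the paper uses 1,...,n).\<close>

definition sym_pattern :: "nat \<Rightarrow> (nat \<times> nat) set \<Rightarrow> bool" where
  "sym_pattern n V \<longleftrightarrow> V \<subseteq> {(i,j). j \<le> i \<and> i < n} \<and> (\<forall>i<n. (i,i) \<in> V)"

definition filled :: "nat \<Rightarrow> (nat \<times> nat) set \<Rightarrow> bool" where
  "filled n V \<longleftrightarrow> sym_pattern n V \<and>
     (\<forall>i j k. i > j \<and> j > k \<and> (i,k) \<in> V \<and> (j,k) \<in> V \<longrightarrow> (i,j) \<in> V)"

definition in_SV :: "nat \<Rightarrow> (nat \<times> nat) set \<Rightarrow> real mat \<Rightarrow> bool" where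
  "in_SV n V X \<longleftrightarrow> X \<in> carrier_mat n n \<and> transpose_mat X = X \<and>
     (\<forall>i j. i < n \<and> j \<le> i \<and> (i,j) \<notin> V \<longrightarrow> X $$ (i,j) = 0 \<and> X $$ (j,i) = 0)"

definition pos_def :: "nat \<Rightarrow> real mat \<Rightarrow> bool" where
  "pos_def n X \<longleftrightarrow> X \<in> carrier_mat n n \<and> transpose_mat X = X \<and>
     (\<forall>v \<in> carrier_vec n. v \<noteq> 0\<^sub>v n \<longrightarrow> v \<bullet> (X *\<^sub>v v) > 0)"

definition unit_lower_tri :: "nat \<Rightarrow> real mat \<Rightarrow> bool" where
  "unit_lower_tri n L \<longleftrightarrow> L \<in> carrier_mat n n \<and> (\<forall>i<n. L $$ (i,i) = 1) \<and>
     (\<forall>i j. i < j \<and> j < n \<longrightarrow> L $$ (i,j) = 0)"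

definition pos_diag :: "nat \<Rightarrow> real mat \<Rightarrow> bool" where
  "pos_diag n D \<longleftrightarrow> D \<in> carrier_mat n n \<and> (\<forall>i<n. D $$ (i,i) > 0) \<and>
     (\<forall>i j. i < n \<and> j < n \<and> i \<noteq> j \<longrightarrow> D $$ (i,j) = 0)"

definition Iset :: "(nat \<times> nat) set \<Rightarrow> nat \<Rightarrow> nat set" where
  "Iset V j = {i. i > j \<and> (i,j) \<in> V}"

definition Iplus :: "(nat \<times> nat) set \<Rightarrow> nat \<Rightarrow> nat set" where
  "Iplus V j = insert j (Iset V j)"

definition parent_rel :: "nat \<Rightarrow> (nat \<times> nat) set \<Rightarrow> (nat \<times> nat) set" where
  "parent_rel n V = {(k, p). k < n \<and> Iset V k \<noteq> {} \<and> p = Min (Iset V k)}"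

definition children :: "nat \<Rightarrow> (nat \<times> nat) set \<Rightarrow> nat \<Rightarrow> nat set" where
  "children n V j = {i. (i, j) \<in> parent_rel n V}"

definition subtree :: "nat \<Rightarrow> (nat \<times> nat) set \<Rightarrow> nat \<Rightarrow> nat set" where
  "subtree n V i = {k. (k, i) \<in> (parent_rel n V)\<^sup>*}"

definition idx :: "nat set \<Rightarrow> nat \<Rightarrow> nat" where
  "idx I a = sorted_list_of_set I ! a"

definition Emat :: "nat set \<Rightarrow> nat set \<Rightarrow> real mat" where
  "Emat I J = mat (card I) (card J) (\<lambda>(a,b). if idx I a = idx J b then 1 else 0)"

text \<open>Submatrix A_{IJ}; A_{Ij} is subm A I {j}.\<close>
definition subm :: "real mat \<Rightarrow> nat set \<Rightarrow> nat set \<Rightarrow> real mat" where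
  "subm A I J = mat (card I) (card J) (\<lambda>(a,b). A $$ (idx I a, idx J b))"

definition msum :: "nat \<Rightarrow> nat set \<Rightarrow> (nat \<Rightarrow> real mat) \<Rightarrow> real mat" where
  "msum m S f = mat m m (\<lambda>(a,b). \<Sum>i\<in>S. f i $$ (a,b))"

definition Umat :: "nat \<Rightarrow> (nat \<times> nat) set \<Rightarrow> (real \<Rightarrow> real mat) \<Rightarrow> (real \<Rightarrow> real mat)
    \<Rightarrow> nat \<Rightarrow> real \<Rightarrow> real mat" where
  "Umat n V L D i t = - msum (card (Iset V i)) (subtree n V i)
     (\<lambda>k. (D t $$ (k,k)) \<cdot>\<^sub>m (subm (L t) (Iset V i) {k} * transpose_mat (subm (L t) (Iset V i) {k})))"

definition mderiv0 :: "(real \<Rightarrow> real mat) \<Rightarrow> real mat" where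
  "mderiv0 M = mat (dim_row (M 0)) (dim_col (M 0)) (\<lambda>(a,b). deriv (\<lambda>t. M t $$ (a,b)) 0)"

end

theory Submission
  imports Defs
begin


lemma idx_in: "finite S \<Longrightarrow> a < card S \<Longrightarrow> idx S a \<in> S"
  unfolding idx_def by (metis length_sorted_list_of_set nth_mem set_sorted_list_of_set)

lemma idx_inj: "finite S \<Longrightarrow> a < card S \<Longrightarrow> b < card S \<Longrightarrow> idx S a = idx S b \<Longrightarrow> a = b"
  unfolding idx_def by (metis distinct_sorted_list_of_set length_sorted_list_of_set nth_eq_iff_index_eq)

lemma sum_idx: "finite S \<Longrightarrow> (\<Sum>c<card S. g (idx S c)) = sum g S"
proof -
  assume f: "finite S"
  let ?xs = "sorted_list_of_set S"
  have "sum g S = sum g (set ?xs)" using f by simp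
  also have "\<dots> = sum_list (map g ?xs)"
    by (simp add: sum_list_distinct_conv_sum_set)
  also have "\<dots> = (\<Sum>i = 0..<length ?xs. map g ?xs ! i)" using sum_list_sum_nth[of "map g ?xs"] by simp
  also have "\<dots> = (\<Sum>c<card S. g (idx S c))" using f
    by (auto simp: idx_def atLeast0LessThan intro!: sum.cong)
  finally show ?thesis by simp
qed

lemma sum_idx_delta: "finite S \<Longrightarrow> (\<Sum>c<card S. if p = idx S c then F (idx S c) else 0) = (if p \<in> S then F p else (0::real))"
  using sum_idx[of S "\<lambda>s. if p = s then F s else 0"] by (simp add: sum.delta)

lemma sorted_insert_min: "finite S \<Longrightarrow> \<forall>s\<in>S. j < s \<Longrightarrow> sorted_list_of_set (insert j S) = j # sorted_list_of_set S"
proof -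
  assume f: "finite S" and m: "\<forall>s\<in>S. j < s"
  have mn: "Min (insert j S) = j" using f m by (simp add: Min_insert2 less_imp_le)
  have "insert j S - {j} = S" using m by auto
  then show ?thesis using sorted_list_of_set_nonempty[of "insert j S"] f mn by simp
qed

lemma idx_insert_min:
  assumes "finite S" "\<forall>s\<in>S. j < s"
  shows "idx (insert j S) 0 = j" "idx (insert j S) (Suc a) = idx S a" "card (insert j S) = Suc (card S)"
  using sorted_insert_min[OF assms] assms unfolding idx_def by (auto simp: card_insert_if)

lemma V_bound: "filled n V \<Longrightarrow> (i,j) \<in> V \<Longrightarrow> j \<le> i \<and> i < n"
proof -
  assume f: "filled n V" and ij: "(i,j) \<in> V"
  have "sym_pattern n V" using f unfolding filled_def by (rule conjunct1)
  then have "V \<subseteq> {(i,j). j \<le> i \<and> i < n}" unfolding sym_pattern_def by (rule conjunct1)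
  then have "(i,j) \<in> {(i,j). j \<le> i \<and> i < n}" using ij by (rule subsetD)
  then show ?thesis by simp
qed

lemma filledD: "filled n V \<Longrightarrow> i > j \<Longrightarrow> j > k \<Longrightarrow> (i,k) \<in> V \<Longrightarrow> (j,k) \<in> V \<Longrightarrow> (i,j) \<in> V"
  unfolding filled_def by blast

lemma Iset_bound: "filled n V \<Longrightarrow> Iset V j \<subseteq> {j<..<n}"
proof
  fix i assume f: "filled n V" and i: "i \<in> Iset V j"
  then have "(i,j) \<in> V" "j < i" unfolding Iset_def by auto
  then show "i \<in> {j<..<n}" using V_bound[OF f] by auto
qed

lemma Iset_finite: "filled n V \<Longrightarrow> finite (Iset V j)"
  using Iset_bound by (metis finite_greaterThanLessThan finite_subset)

lemma par_props: "filled n V \<Longrightarrow> (k,p) \<in> parent_rel n V \<Longrightarrow> k < p \<and> p < n \<and> p \<in> Iset V k \<and> k < n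
   \<and> (\<forall>q\<in>Iset V k. p \<le> q)"
proof -
  assume f: "filled n V" and kp: "(k,p) \<in> parent_rel n V"
  have fin: "finite (Iset V k)" using Iset_finite[OF f] .
  have ne: "Iset V k \<noteq> {}" and p: "p = Min (Iset V k)" and kn: "k < n" using kp unfolding parent_rel_def by auto
  have pin: "p \<in> Iset V k" using Min_in[OF fin ne] p by simp
  have "p \<in> {k<..<n}" using pin Iset_bound[OF f, of k] by blast
  moreover have "\<forall>q\<in>Iset V k. p \<le> q" using p fin by simp
  ultimately show ?thesis using pin kn by simp
qed

lemma par_fun: "(k,p) \<in> parent_rel n V \<Longrightarrow> (k,p') \<in> parent_rel n V \<Longrightarrow> p = p'"
  unfolding parent_rel_def by auto

lemma subtree_le: "filled n V \<Longrightarrow> k \<in> subtree n V i \<Longrightarrow> k \<le> i"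
proof -
  assume f: "filled n V" and k: "k \<in> subtree n V i"
  have "(k,i) \<in> (parent_rel n V)\<^sup>*" using k unfolding subtree_def by auto
  then show ?thesis
    by (induction rule: converse_rtrancl_induct) (use par_props[OF f] in force)+
qed

lemma subtree_finite: "filled n V \<Longrightarrow> finite (subtree n V i)"
  by (rule finite_subset[of _ "{..i}"]) (auto dest: subtree_le)

lemma children_props: "filled n V \<Longrightarrow> c \<in> children n V j \<Longrightarrow> c < j \<and> j < n \<and> j \<in> Iset V c"
  unfolding children_def using par_props by blast

lemma children_finite: "filled n V \<Longrightarrow> finite (children n V j)"
  by (rule finite_subset[of _ "{..<n}"]) (auto dest: children_props)

lemma Iset_sub_Iplus:
  assumes f: "filled n V" and kp: "(k,p) \<in> parent_rel n V" and q: "q \<in> Iset V k"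
  shows "q \<in> Iplus V p"
proof -
  have P: "k < p \<and> p < n \<and> p \<in> Iset V k \<and> (\<forall>q\<in>Iset V k. p \<le> q)" using par_props[OF f kp] by auto
  show ?thesis
  proof (cases "q = p")
    case True then show ?thesis unfolding Iplus_def by simp
  next
    case False
    have "p \<le> q" using P q by blast
    then have "q > p" using False by simp
    moreover have "(q,k) \<in> V" "(p,k) \<in> V" using q P unfolding Iset_def by auto
    ultimately have "(q,p) \<in> V" using filledD[OF f] P by blast
    then show ?thesis using \<open>q > p\<close> unfolding Iplus_def Iset_def by auto
  qed
qed

lemma anc_Iset:
  assumes f: "filled n V" and k: "k \<in> subtree n V i"
  shows "q \<in> Iset V k \<Longrightarrow> q > i \<Longrightarrow> q \<in> Iset V i"
proof -
  have "(k,i) \<in> (parent_rel n V)\<^sup>*" using k unfolding subtree_def by auto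
  then show "q \<in> Iset V k \<Longrightarrow> q > i \<Longrightarrow> q \<in> Iset V i"
  proof (induction arbitrary: q rule: converse_rtrancl_induct)
    case base then show ?case by simp
  next
    case (step k p)
    have "p \<le> i" using subtree_le[OF f, of p i] step.hyps(2) unfolding subtree_def by auto
    have "q \<in> Iplus V p" using Iset_sub_Iplus[OF f step.hyps(1) step.prems(1)] .
    then have "q \<in> Iset V p" using \<open>p \<le> i\<close> step.prems(2) unfolding Iplus_def by auto
    then show ?case using step.IH step.prems(2) by blast
  qed
qed

lemma desc:
  assumes f: "filled n V"
  shows "(j,k) \<in> V \<Longrightarrow> k < j \<Longrightarrow> k \<in> subtree n V j"
proof (induction "j - k" arbitrary: k rule: less_induct)
  case less
  have jn: "j < n" using V_bound[OF f less.prems(1)] by simp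
  have jI: "j \<in> Iset V k" using less.prems unfolding Iset_def by auto
  then have ne: "Iset V k \<noteq> {}" by auto
  define p where "p = Min (Iset V k)"
  have kn: "k < n" using less.prems jn by simp
  have kp: "(k,p) \<in> parent_rel n V" unfolding parent_rel_def p_def using ne kn by auto
  have P: "k < p \<and> p < n \<and> p \<in> Iset V k \<and> (\<forall>q\<in>Iset V k. p \<le> q)" using par_props[OF f kp] by auto
  show ?case
  proof (cases "p = j")
    case True then show ?thesis using kp unfolding subtree_def by auto
  next
    case False
    have "p \<le> j" using P jI by blast
    then have "p < j" using False by simp
    moreover have "(j,k) \<in> V" "(p,k) \<in> V" using P less.prems unfolding Iset_def by auto
    ultimately have "(j,p) \<in> V" using filledD[OF f] P by blast
    then have "p \<in> subtree n V j" using less.hyps[of p] P \<open>p < j\<close> by auto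
    then show ?thesis using kp unfolding subtree_def by (auto intro: converse_rtrancl_into_rtrancl)
  qed
qed

lemma rtr_lin:
  assumes f: "filled n V"
  shows "(k,a) \<in> (parent_rel n V)\<^sup>* \<Longrightarrow> (k,b) \<in> (parent_rel n V)\<^sup>* \<Longrightarrow> a \<le> b \<Longrightarrow> (a,b) \<in> (parent_rel n V)\<^sup>*"
proof (induction rule: converse_rtrancl_induct)
  case base then show ?case by simp
next
  case (step k p)
  from step.prems(1) show ?case
  proof (cases rule: converse_rtranclE)
    case base
    have "p \<le> a" using subtree_le[OF f, of p a] step.hyps(2) unfolding subtree_def by auto
    then show ?thesis using par_props[OF f step.hyps(1)] base step.prems(2) by auto
  next
    case (step p')
    then have "p' = p" using par_fun step.hyps(1) by metis
    then show ?thesis using step.IH step \<open>a \<le> b\<close> by auto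
  qed
qed

lemma subtree_disj:
  assumes f: "filled n V" and c1: "c1 \<in> children n V j" and c2: "c2 \<in> children n V j" and ne: "c1 \<noteq> c2"
  shows "subtree n V c1 \<inter> subtree n V c2 = {}"
proof (rule ccontr)
  assume "subtree n V c1 \<inter> subtree n V c2 \<noteq> {}"
  then obtain k where k1: "(k,c1) \<in> (parent_rel n V)\<^sup>*" and k2: "(k,c2) \<in> (parent_rel n V)\<^sup>*"
    unfolding subtree_def by blast
  have key: "False" if a: "a \<in> children n V j" and b: "b \<in> children n V j" and ab: "a \<noteq> b"
      and r: "(a,b) \<in> (parent_rel n V)\<^sup>*" for a b
  proof -
    have "a = b \<or> (\<exists>x. (a,x) \<in> parent_rel n V \<and> (x,b) \<in> (parent_rel n V)\<^sup>*)"
      using r by (rule converse_rtranclE) blast+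
    then obtain x where ax: "(a,x) \<in> parent_rel n V" and xb: "(x,b) \<in> (parent_rel n V)\<^sup>*"
      using ab by blast
    have aj: "(a,j) \<in> parent_rel n V" using a unfolding children_def by simp
    have "x = j" using par_fun[OF ax aj] .
    then have "x \<in> subtree n V b" using xb unfolding subtree_def by simp
    then have "j \<le> b" using subtree_le[OF f] \<open>x = j\<close> by blast
    then show False using children_props[OF f b] by simp
  qed
  show False
  proof (cases "c1 \<le> c2")
    case True then show False using key[OF c1 c2 ne rtr_lin[OF f k1 k2 True]] by blast
  next
    case False
    then have "c2 \<le> c1" by simp
    then show False using key[OF c2 c1 ne[symmetric] rtr_lin[OF f k2 k1]] by blast
  qed
qed

lemma subtree_decomp:
  assumes f: "filled n V"
  shows "subtree n V j - {j} = (\<Union>c\<in>children n V j. subtree n V c)"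
proof
  show "subtree n V j - {j} \<subseteq> (\<Union>c\<in>children n V j. subtree n V c)"
  proof
    fix k assume "k \<in> subtree n V j - {j}"
    then have r: "(k,j) \<in> (parent_rel n V)\<^sup>*" and kj: "k \<noteq> j" unfolding subtree_def by auto
    from r kj obtain c where "(k,c) \<in> (parent_rel n V)\<^sup>*" "(c,j) \<in> parent_rel n V"
      by (metis rtranclE)
    then show "k \<in> (\<Union>c\<in>children n V j. subtree n V c)" unfolding subtree_def children_def by auto
  qed
next
  show "(\<Union>c\<in>children n V j. subtree n V c) \<subseteq> subtree n V j - {j}"
  proof
    fix k assume "k \<in> (\<Union>c\<in>children n V j. subtree n V c)"
    then obtain c where c: "c \<in> children n V j" and k: "k \<in> subtree n V c" by auto
    have "k \<le> c" "c < j" using subtree_le[OF f k] children_props[OF f c] by auto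
    moreover have "(k,j) \<in> (parent_rel n V)\<^sup>*" using c k unfolding subtree_def children_def by auto
    ultimately show "k \<in> subtree n V j - {j}" unfolding subtree_def by auto
  qed
qed

lemma sum_subtree:
  assumes f: "filled n V"
  shows "sum g (subtree n V j - {j}) = (\<Sum>c\<in>children n V j. sum g (subtree n V c))"
  unfolding subtree_decomp[OF f]
  by (rule sum.UNION_disjoint) (auto simp: children_finite[OF f] subtree_finite[OF f] dest: subtree_disj[OF f])

lemma j_in_subtree: "j \<in> subtree n V j" unfolding subtree_def by auto




lemma block_rhs:
  fixes l l' Dm U :: "real mat" and d :: real
  assumes l: "l \<in> carrier_mat m 1" and l': "l' \<in> carrier_mat m 1" and Dm: "Dm \<in> carrier_mat 1 1"
    and U: "U \<in> carrier_mat m m" and a: "a < Suc m" and b: "b < Suc m"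
  shows "(four_block_mat (1\<^sub>m 1) (0\<^sub>m 1 m) l (1\<^sub>m m)
        * four_block_mat Dm (d \<cdot>\<^sub>m transpose_mat l') (d \<cdot>\<^sub>m l') U
        * four_block_mat (1\<^sub>m 1) (transpose_mat l) (0\<^sub>m m 1) (1\<^sub>m m)) $$ (a,b)
     = Dm $$ (0,0) * (if a = 0 then 1 else l $$ (a-1,0)) * (if b = 0 then 1 else l $$ (b-1,0))
       + d * (if a = 0 then 0 else l' $$ (a-1,0)) * (if b = 0 then 1 else l $$ (b-1,0))
       + d * (if a = 0 then 1 else l $$ (a-1,0)) * (if b = 0 then 0 else l' $$ (b-1,0))
       + (if 0 < a \<and> 0 < b then U $$ (a-1,b-1) else 0)"
proof -
  have e1: "four_block_mat (1\<^sub>m 1) (0\<^sub>m 1 m) l (1\<^sub>m m)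
        * four_block_mat Dm (d \<cdot>\<^sub>m transpose_mat l') (d \<cdot>\<^sub>m l') U
     = four_block_mat (1\<^sub>m 1 * Dm + 0\<^sub>m 1 m * (d \<cdot>\<^sub>m l')) (1\<^sub>m 1 * (d \<cdot>\<^sub>m transpose_mat l') + 0\<^sub>m 1 m * U)
         (l * Dm + 1\<^sub>m m * (d \<cdot>\<^sub>m l')) (l * (d \<cdot>\<^sub>m transpose_mat l') + 1\<^sub>m m * U)"
    by (rule mult_four_block_mat, insert l l' Dm U, auto)
  define P where "P = four_block_mat (1\<^sub>m 1 * Dm + 0\<^sub>m 1 m * (d \<cdot>\<^sub>m l')) (1\<^sub>m 1 * (d \<cdot>\<^sub>m transpose_mat l') + 0\<^sub>m 1 m * U)
         (l * Dm + 1\<^sub>m m * (d \<cdot>\<^sub>m l')) (l * (d \<cdot>\<^sub>m transpose_mat l') + 1\<^sub>m m * U)"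
  have e2: "P * four_block_mat (1\<^sub>m 1) (transpose_mat l) (0\<^sub>m m 1) (1\<^sub>m m) = 
    four_block_mat ((1\<^sub>m 1 * Dm + 0\<^sub>m 1 m * (d \<cdot>\<^sub>m l')) * 1\<^sub>m 1 + (1\<^sub>m 1 * (d \<cdot>\<^sub>m transpose_mat l') + 0\<^sub>m 1 m * U) * 0\<^sub>m m 1)
      ((1\<^sub>m 1 * Dm + 0\<^sub>m 1 m * (d \<cdot>\<^sub>m l')) * transpose_mat l + (1\<^sub>m 1 * (d \<cdot>\<^sub>m transpose_mat l') + 0\<^sub>m 1 m * U) * 1\<^sub>m m)
      ((l * Dm + 1\<^sub>m m * (d \<cdot>\<^sub>m l')) * 1\<^sub>m 1 + (l * (d \<cdot>\<^sub>m transpose_mat l') + 1\<^sub>m m * U) * 0\<^sub>m m 1)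
      ((l * Dm + 1\<^sub>m m * (d \<cdot>\<^sub>m l')) * transpose_mat l + (l * (d \<cdot>\<^sub>m transpose_mat l') + 1\<^sub>m m * U) * 1\<^sub>m m)"
    unfolding P_def by (rule mult_four_block_mat, insert l l' Dm U, auto)
  show ?thesis
    unfolding e1 P_def[symmetric] e2 using l l' Dm U a b
    apply (simp add: scalar_prod_def)
    by (auto simp: algebra_simps)
qed



locale ldl =
  fixes n :: nat and V :: "(nat \<times> nat) set" and X Y :: "real mat"
    and L D :: "real \<Rightarrow> real mat" and \<epsilon> :: real
  assumes fil: "filled n V" and Xsv: "in_SV n V X" and Ysv: "in_SV n V Y" and eps: "\<epsilon> > 0"
    and fac: "\<And>t. \<bar>t\<bar> < \<epsilon> \<Longrightarrow> unit_lower_tri n (L t) \<and> pos_diag n (D t) \<and>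
                         X + t \<cdot>\<^sub>m Y = L t * D t * transpose_mat (L t)"
begin

lemma Lprops:
  assumes "\<bar>t\<bar> < \<epsilon>"
  shows "L t \<in> carrier_mat n n" "D t \<in> carrier_mat n n"
    "\<And>i. i < n \<Longrightarrow> L t $$ (i,i) = 1"
    "\<And>i j. i < j \<Longrightarrow> j < n \<Longrightarrow> L t $$ (i,j) = 0"
    "\<And>i. i < n \<Longrightarrow> D t $$ (i,i) > 0"
    "\<And>i j. i < n \<Longrightarrow> j < n \<Longrightarrow> i \<noteq> j \<Longrightarrow> D t $$ (i,j) = 0"
    "X + t \<cdot>\<^sub>m Y = L t * D t * transpose_mat (L t)"
  using fac[OF assms] unfolding unit_lower_tri_def pos_diag_def by auto

lemma XYc: "X \<in> carrier_mat n n" "Y \<in> carrier_mat n n"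
  using Xsv Ysv unfolding in_SV_def by auto

lemma entry:
  assumes t: "\<bar>t\<bar> < \<epsilon>" and p: "p < n" and q: "q < n"
  shows "X $$ (p,q) + t * Y $$ (p,q) = (\<Sum>k<n. D t $$ (k,k) * L t $$ (p,k) * L t $$ (q,k))"
proof -
  note P = Lprops[OF t]
  have e1: "(X + t \<cdot>\<^sub>m Y) $$ (p,q) = X $$ (p,q) + t * Y $$ (p,q)" using XYc p q by simp
  have LD: "(L t * D t) $$ (p,k) = L t $$ (p,k) * D t $$ (k,k)" if k: "k < n" for k
  proof -
    have "(L t * D t) $$ (p,k) = (\<Sum>i\<in>{0..<n}. L t $$ (p,i) * D t $$ (i,k))"
      using P(1,2) p k by (simp add: scalar_prod_def)
    also have "\<dots> = (\<Sum>i\<in>{0..<n}. if i = k then L t $$ (p,k) * D t $$ (k,k) else 0)"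
      by (rule sum.cong) (use P(6) k in auto)
    also have "\<dots> = L t $$ (p,k) * D t $$ (k,k)" using k by simp
    finally show ?thesis .
  qed
  have "(L t * D t * transpose_mat (L t)) $$ (p,q) = row (L t * D t) p \<bullet> col (transpose_mat (L t)) q"
    using P(1,2) p q by (intro index_mult_mat(1)) auto
  also have "\<dots> = (\<Sum>k\<in>{0..<n}. (L t * D t) $$ (p,k) * L t $$ (q,k))"
    unfolding scalar_prod_def using P(1,2) p q by (intro sum.cong) auto
  also have "\<dots> = (\<Sum>k<n. D t $$ (k,k) * L t $$ (p,k) * L t $$ (q,k))"
    by (rule sum.cong) (auto simp: LD)
  finally show ?thesis using e1 P(7) by simp
qed

lemma entry2:
  assumes t: "\<bar>t\<bar> < \<epsilon>" and ji: "j \<le> i" and i: "i < n"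
  shows "X $$ (i,j) + t * Y $$ (i,j) = L t $$ (i,j) * D t $$ (j,j) + (\<Sum>k<j. D t $$ (k,k) * L t $$ (i,k) * L t $$ (j,k))"
proof -
  note P = Lprops[OF t]
  have "(\<Sum>k<n. D t $$ (k,k) * L t $$ (i,k) * L t $$ (j,k)) = (\<Sum>k<Suc j. D t $$ (k,k) * L t $$ (i,k) * L t $$ (j,k))"
    by (rule sum.mono_neutral_right) (use ji i P(4) in auto)
  also have "\<dots> = L t $$ (i,j) * D t $$ (j,j) + (\<Sum>k<j. D t $$ (k,k) * L t $$ (i,k) * L t $$ (j,k))"
    using P(3) ji i by simp
  finally show ?thesis using entry[OF t i] ji i by simp
qed

lemma sparse:
  assumes t: "\<bar>t\<bar> < \<epsilon>"
  shows "i < n \<Longrightarrow> j < i \<Longrightarrow> (i,j) \<notin> V \<Longrightarrow> L t $$ (i,j) = 0"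
proof (induction j arbitrary: i rule: less_induct)
  case (less j)
  note P = Lprops[OF t]
  have X0: "X $$ (i,j) = 0" "Y $$ (i,j) = 0" using Xsv Ysv less.prems unfolding in_SV_def by auto
  have S0: "(\<Sum>k<j. D t $$ (k,k) * L t $$ (i,k) * L t $$ (j,k)) = 0"
  proof (rule sum.neutral, rule ballI)
    fix k assume k: "k \<in> {..<j}"
    show "D t $$ (k,k) * L t $$ (i,k) * L t $$ (j,k) = 0"
    proof (cases "(i,k) \<in> V \<and> (j,k) \<in> V")
      case True
      then have "(i,j) \<in> V" using filledD[OF fil, of j i k] k less.prems by auto
      then show ?thesis using less.prems by simp
    next
      case False
      then show ?thesis using less.IH[of k] k less.prems by auto
    qed
  qed
  have "L t $$ (i,j) * D t $$ (j,j) = 0" using entry2[OF t, of j i] less.prems X0 S0 by simp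
  moreover have "D t $$ (j,j) > 0" using P(5) less.prems by simp
  ultimately show ?case by simp
qed

lemma transfer_diff:
  assumes "\<And>t. \<bar>t\<bar> < \<epsilon> \<Longrightarrow> f t = g t" and "g differentiable (at 0)"
  shows "f differentiable (at (0::real))"
proof -
  obtain g' where "(g has_derivative g') (at 0)" using assms(2) unfolding differentiable_def by auto
  then have "(f has_derivative g') (at 0)"
    by (rule has_derivative_transform_within_open[where s="ball 0 \<epsilon>"]) (use assms(1) eps in \<open>auto simp: dist_real_def\<close>)
  then show ?thesis unfolding differentiable_def by auto
qed

lemma transfer_deriv:
  assumes "\<And>t. \<bar>t\<bar> < \<epsilon> \<Longrightarrow> f t = g t" and "(g has_real_derivative g') (at 0)"
  shows "(f has_real_derivative g') (at (0::real))"
  by (rule has_field_derivative_transform_within_open[where S="ball 0 \<epsilon>", OF assms(2)])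
     (use assms(1) eps in \<open>auto simp: dist_real_def\<close>)

lemma const_near:
  assumes "\<And>t. \<bar>t\<bar> < \<epsilon> \<Longrightarrow> f t = c"
  shows "(f has_real_derivative 0) (at (0::real))" "f 0 = c"
  using transfer_deriv[of f "\<lambda>_. c" 0] assms eps by auto

lemma XY_der: "((\<lambda>t. X $$ (i,j) + t * Y $$ (i,j)) has_real_derivative Y $$ (i,j)) (at (0::real))"
  using DERIV_add[OF DERIV_const DERIV_cmult_right[OF DERIV_ident, of "Y $$ (i,j)"], of "X $$ (i,j)"] by simp

lemma XY_diff: "(\<lambda>t. X $$ (i,j) + t * Y $$ (i,j)) differentiable (at (0::real))"
  using XY_der DERIV_imp_deriv DERIV_deriv_iff_real_differentiable by metis

lemma diffable:
  shows "j < n \<Longrightarrow> (\<forall>i<n. (\<lambda>t. L t $$ (i,j)) differentiable (at 0)) \<and> (\<lambda>t. D t $$ (j,j)) differentiable (at 0)"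
proof (induction j rule: less_induct)
  case (less j)
  have IH: "\<And>k i. k < j \<Longrightarrow> i < n \<Longrightarrow> (\<lambda>t. D t $$ (k,k) * L t $$ (i,k) * L t $$ (j,k)) differentiable (at 0)"
    using less.IH less.prems by (intro differentiable_mult) auto
  have Sd: "i < n \<Longrightarrow> (\<lambda>t. \<Sum>k<j. D t $$ (k,k) * L t $$ (i,k) * L t $$ (j,k)) differentiable (at 0)" for i
    using IH by (intro differentiable_sum) auto
  have Dd: "(\<lambda>t. D t $$ (j,j)) differentiable (at 0)"
  proof (rule transfer_diff)
    show "D t $$ (j,j) = (X $$ (j,j) + t * Y $$ (j,j)) - (\<Sum>k<j. D t $$ (k,k) * L t $$ (j,k) * L t $$ (j,k))"
      if "\<bar>t\<bar> < \<epsilon>" for t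
      using entry2[OF that, of j j] Lprops(3)[OF that, of j] less.prems by simp
    show "(\<lambda>t. (X $$ (j,j) + t * Y $$ (j,j)) - (\<Sum>k<j. D t $$ (k,k) * L t $$ (j,k) * L t $$ (j,k))) differentiable (at 0)"
      using Sd[of j] less.prems XY_diff by (intro differentiable_diff) auto
  qed
  have D0: "D 0 $$ (j,j) \<noteq> 0" using Lprops(5)[of 0 j] eps less.prems by auto
  have "(\<lambda>t. L t $$ (i,j)) differentiable (at 0)" if i: "i < n" for i
  proof (cases "i < j")
    case True
    then show ?thesis using const_near[of "\<lambda>t. L t $$ (i,j)" 0] Lprops(4)[of _ i j] less.prems
      unfolding differentiable_def by (metis has_field_derivative_imp_has_derivative)
  next
    case False
    show ?thesis
    proof (rule transfer_diff)
      show "L t $$ (i,j) = ((X $$ (i,j) + t * Y $$ (i,j)) - (\<Sum>k<j. D t $$ (k,k) * L t $$ (i,k) * L t $$ (j,k))) / D t $$ (j,j)"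
        if "\<bar>t\<bar> < \<epsilon>" for t
        using entry2[OF that, of j i] Lprops(5)[OF that, of j] less.prems False i by (simp add: field_simps)
      show "(\<lambda>t. ((X $$ (i,j) + t * Y $$ (i,j)) - (\<Sum>k<j. D t $$ (k,k) * L t $$ (i,k) * L t $$ (j,k))) / D t $$ (j,j)) differentiable (at 0)"
        using Sd[OF i] XY_diff Dd D0 by (intro differentiable_divide differentiable_diff) auto
    qed
  qed
  then show ?case using Dd by auto
qed

lemma diffD: "a < n \<Longrightarrow> b < n \<Longrightarrow> (\<lambda>t. D t $$ (a,b)) differentiable (at 0)"
proof (cases "a = b")
  case True
  assume "a < n" "b < n" then show ?thesis using diffable True by auto
next
  case False
  assume ab: "a < n" "b < n"
  then show ?thesis using const_near[of "\<lambda>t. D t $$ (a,b)" 0] Lprops(6)[of _ a b] False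
    unfolding differentiable_def by (metis has_field_derivative_imp_has_derivative)
qed

lemma diffL: "a < n \<Longrightarrow> b < n \<Longrightarrow> (\<lambda>t. L t $$ (a,b)) differentiable (at 0)"
  using diffable by auto

definition dL where "dL p k = deriv (\<lambda>t. L t $$ (p,k)) 0"
definition dD where "dD k = deriv (\<lambda>t. D t $$ (k,k)) 0"
definition h where "h k p q = dD k * L 0 $$ (p,k) * L 0 $$ (q,k) + D 0 $$ (k,k) * dL p k * L 0 $$ (q,k)
    + D 0 $$ (k,k) * L 0 $$ (p,k) * dL q k"

lemma hasL: "a < n \<Longrightarrow> b < n \<Longrightarrow> ((\<lambda>t. L t $$ (a,b)) has_real_derivative dL a b) (at 0)"
  unfolding dL_def using diffL DERIV_deriv_iff_real_differentiable by blast

lemma hasD: "a < n \<Longrightarrow> ((\<lambda>t. D t $$ (a,a)) has_real_derivative dD a) (at 0)"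
  unfolding dD_def using diffD DERIV_deriv_iff_real_differentiable by blast

lemma has_h: "k < n \<Longrightarrow> p < n \<Longrightarrow> q < n \<Longrightarrow>
  ((\<lambda>t. D t $$ (k,k) * L t $$ (p,k) * L t $$ (q,k)) has_real_derivative h k p q) (at 0)"
proof -
  assume k: "k < n" and p: "p < n" and q: "q < n"
  have 1: "((\<lambda>t. D t $$ (k,k)) has_real_derivative dD k) (at 0)" using hasD[OF k] .
  have 2: "((\<lambda>t. L t $$ (p,k)) has_real_derivative dL p k) (at 0)" using hasL[OF p k] .
  have 3: "((\<lambda>t. L t $$ (q,k)) has_real_derivative dL q k) (at 0)" using hasL[OF q k] .
  have 4: "((\<lambda>t. D t $$ (k,k) * L t $$ (p,k) * L t $$ (q,k)) has_real_derivative
      (dD k * L 0 $$ (p,k) + dL p k * D 0 $$ (k,k)) * L 0 $$ (q,k) + dL q k * (D 0 $$ (k,k) * L 0 $$ (p,k))) (at 0)"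
    by (rule DERIV_mult[OF DERIV_mult[OF 1 2] 3])
  have 5: "(dD k * L 0 $$ (p,k) + dL p k * D 0 $$ (k,k)) * L 0 $$ (q,k) + dL q k * (D 0 $$ (k,k) * L 0 $$ (p,k)) = h k p q"
    unfolding h_def by (simp add: algebra_simps)
  show ?thesis using 4 unfolding 5 .
qed

lemma Y_sum: "p < n \<Longrightarrow> q < n \<Longrightarrow> Y $$ (p,q) = (\<Sum>k<n. h k p q)"
proof -
  assume p: "p < n" and q: "q < n"
  have d1: "((\<lambda>t. X $$ (p,q) + t * Y $$ (p,q)) has_real_derivative Y $$ (p,q)) (at 0)"
    by (rule XY_der)
  have "((\<lambda>t. \<Sum>k<n. D t $$ (k,k) * L t $$ (p,k) * L t $$ (q,k)) has_real_derivative Y $$ (p,q)) (at 0)"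
    by (rule has_field_derivative_transform_within_open[where S="ball 0 \<epsilon>", OF d1])
       (use eps in \<open>simp\<close>, use eps in \<open>simp\<close>, rule entry, auto simp: dist_real_def p q)
  moreover have "((\<lambda>t. \<Sum>k<n. D t $$ (k,k) * L t $$ (p,k) * L t $$ (q,k)) has_real_derivative (\<Sum>k<n. h k p q)) (at 0)"
    using has_h p q by (intro DERIV_sum) auto
  ultimately show ?thesis using DERIV_unique by blast
qed

lemma zeroL:
  assumes z: "\<And>t. \<bar>t\<bar> < \<epsilon> \<Longrightarrow> L t $$ (p,k) = 0" and p: "p < n" and k: "k < n"
  shows "L 0 $$ (p,k) = 0" "dL p k = 0"
proof -
  have "((\<lambda>t. L t $$ (p,k)) has_real_derivative 0) (at 0)" by (rule const_near(1)) (rule z)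
  then show "dL p k = 0" using hasL[OF p k] DERIV_unique by blast
  show "L 0 $$ (p,k) = 0" using z[of 0] eps by simp
qed

lemma h_zero:
  assumes A: "(\<forall>t. \<bar>t\<bar> < \<epsilon> \<longrightarrow> L t $$ (p,k) = 0) \<or> (\<forall>t. \<bar>t\<bar> < \<epsilon> \<longrightarrow> L t $$ (q,k) = 0)"
    and p: "p < n" and q: "q < n" and k: "k < n"
  shows "h k p q = 0"
proof (cases "\<forall>t. \<bar>t\<bar> < \<epsilon> \<longrightarrow> L t $$ (q,k) = 0")
  case True
  then have z: "\<And>t. \<bar>t\<bar> < \<epsilon> \<Longrightarrow> L t $$ (q,k) = 0" by blast
  show ?thesis using zeroL[OF z q k] unfolding h_def by simp
next
  case False
  then have z: "\<And>t. \<bar>t\<bar> < \<epsilon> \<Longrightarrow> L t $$ (p,k) = 0" using A by blast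
  show ?thesis using zeroL[OF z p k] unfolding h_def by simp
qed

lemma Lnear_zero: "p < n \<Longrightarrow> k < n \<Longrightarrow> p \<noteq> k \<Longrightarrow> (p < k \<or> (p,k) \<notin> V) \<Longrightarrow> \<bar>t\<bar> < \<epsilon> \<Longrightarrow> L t $$ (p,k) = 0"
  using Lprops(4) sparse by (metis linorder_neqE_nat)

lemma L0jj: "j < n \<Longrightarrow> L 0 $$ (j,j) = 1" using Lprops(3)[of 0 j] eps by auto
lemma dLjj: "j < n \<Longrightarrow> dL j j = 0"
proof -
  assume j: "j < n"
  have "((\<lambda>t. L t $$ (j,j)) has_real_derivative 0) (at 0)" using const_near(1)[of "\<lambda>t. L t $$ (j,j)" 1] Lprops(3) j by blast
  then show ?thesis using hasL[OF j j] DERIV_unique by blast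
qed

lemma h_sym: "h k p q = h k q p" unfolding h_def by (simp add: algebra_simps)

end



lemma idx_single[simp]: "idx {k} 0 = k" unfolding idx_def by simp

lemma Emat_entry: "x < card Ip \<Longrightarrow> y < card Ii \<Longrightarrow> Emat Ip Ii $$ (x,y) = (if idx Ip x = idx Ii y then 1 else 0)"
  "dim_row (Emat Ip Ii) = card Ip" "dim_col (Emat Ip Ii) = card Ii"
  unfolding Emat_def by auto

lemma EUE:
  assumes fi: "finite Ii" and U: "U \<in> carrier_mat (card Ii) (card Ii)"
    and G: "\<And>c e. c < card Ii \<Longrightarrow> e < card Ii \<Longrightarrow> U $$ (c,e) = G (idx Ii c) (idx Ii e)"
    and a: "a < card Ip" and b: "b < card Ip"
  shows "(Emat Ip Ii * U * transpose_mat (Emat Ip Ii)) $$ (a,b)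
     = (if idx Ip a \<in> Ii \<and> idx Ip b \<in> Ii then G (idx Ip a) (idx Ip b) else 0)"
proof -
  let ?p = "idx Ip a" and ?q = "idx Ip b"
  have EU: "(Emat Ip Ii * U) $$ (a,e) = (if ?p \<in> Ii then G ?p (idx Ii e) else 0)" if e: "e < card Ii" for e
  proof -
    have "(Emat Ip Ii * U) $$ (a,e) = (\<Sum>c\<in>{0..<card Ii}. Emat Ip Ii $$ (a,c) * U $$ (c,e))"
      using U a e by (simp add: scalar_prod_def Emat_entry)
    also have "\<dots> = (\<Sum>c<card Ii. if ?p = idx Ii c then G (idx Ii c) (idx Ii e) else 0)"
      using a e by (auto simp: Emat_entry G atLeast0LessThan intro!: sum.cong)
    also have "\<dots> = (if ?p \<in> Ii then G ?p (idx Ii e) else 0)"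
      using sum_idx_delta[OF fi, of ?p "\<lambda>s. G s (idx Ii e)"] by simp
    finally show ?thesis .
  qed
  have "(Emat Ip Ii * U * transpose_mat (Emat Ip Ii)) $$ (a,b)
      = (\<Sum>e\<in>{0..<card Ii}. (Emat Ip Ii * U) $$ (a,e) * Emat Ip Ii $$ (b,e))"
    using U a b by (simp add: scalar_prod_def Emat_entry)
  also have "\<dots> = (\<Sum>e<card Ii. if ?q = idx Ii e then (if ?p \<in> Ii then G ?p (idx Ii e) else 0) else 0)"
    using a b by (auto simp: Emat_entry EU atLeast0LessThan intro!: sum.cong)
  also have "\<dots> = (if ?q \<in> Ii then (if ?p \<in> Ii then G ?p ?q else 0) else 0)"
    using sum_idx_delta[OF fi, of ?q "\<lambda>s. if ?p \<in> Ii then G ?p s else 0"] by simp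
  finally show ?thesis by auto
qed

context ldl begin

lemma Iset_lt: "i \<in> Iset V k \<Longrightarrow> k < i \<and> i < n" using Iset_bound[OF fil, of k] by auto

lemma Umat_dim: "dim_row (Umat n V L D i t) = card (Iset V i)" "dim_col (Umat n V L D i t) = card (Iset V i)"
  unfolding Umat_def msum_def by auto

lemma Umat_entry:
  assumes c: "c < card (Iset V i)" and e: "e < card (Iset V i)"
  shows "Umat n V L D i t $$ (c,e) = - (\<Sum>k\<in>subtree n V i. D t $$ (k,k) * L t $$ (idx (Iset V i) c, k) * L t $$ (idx (Iset V i) e, k))"
  using c e unfolding Umat_def msum_def subm_def by (auto simp: scalar_prod_def intro!: sum.cong)

lemma dU:
  assumes i: "i < n" and c: "c < card (Iset V i)" and e: "e < card (Iset V i)"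
  shows "mderiv0 (Umat n V L D i) $$ (c,e) = - (\<Sum>k\<in>subtree n V i. h k (idx (Iset V i) c) (idx (Iset V i) e))"
    "dim_row (mderiv0 (Umat n V L D i)) = card (Iset V i)" "dim_col (mderiv0 (Umat n V L D i)) = card (Iset V i)"
proof -
  let ?I = "Iset V i"
  have pc: "idx ?I c < n" "idx ?I e < n" using idx_in[OF Iset_finite[OF fil] c] idx_in[OF Iset_finite[OF fil] e] Iset_lt by auto
  have kn: "k < n" if "k \<in> subtree n V i" for k using subtree_le[OF fil that] i by simp
  have "((\<lambda>t. Umat n V L D i t $$ (c,e)) has_real_derivative - (\<Sum>k\<in>subtree n V i. h k (idx ?I c) (idx ?I e))) (at 0)"
    unfolding Umat_entry[OF c e]
    by (intro DERIV_minus DERIV_sum has_h) (use pc kn in auto)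
  then show "mderiv0 (Umat n V L D i) $$ (c,e) = - (\<Sum>k\<in>subtree n V i. h k (idx ?I c) (idx ?I e))"
    unfolding mderiv0_def using c e Umat_dim by (simp add: DERIV_imp_deriv)
  show "dim_row (mderiv0 (Umat n V L D i)) = card (Iset V i)" "dim_col (mderiv0 (Umat n V L D i)) = card (Iset V i)"
    unfolding mderiv0_def using Umat_dim by auto
qed

lemma L0c: "L 0 \<in> carrier_mat n n" "D 0 \<in> carrier_mat n n" using Lprops(1,2)[of 0] eps by auto

lemma mdL: "p < n \<Longrightarrow> k < n \<Longrightarrow> mderiv0 L $$ (p,k) = dL p k"
  unfolding mderiv0_def dL_def using L0c by auto
lemma mdD: "k < n \<Longrightarrow> mderiv0 D $$ (k,k) = dD k"
  unfolding mderiv0_def dD_def using L0c by auto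
lemma mdLc: "dim_row (mderiv0 L) = n" "dim_col (mderiv0 L) = n" "dim_row (mderiv0 D) = n" "dim_col (mderiv0 D) = n"
  unfolding mderiv0_def using L0c by auto

lemma child_zero:
  assumes j: "j < n" and c: "c \<in> children n V j" and p: "p \<in> Iplus V j" and q: "q \<in> Iplus V j"
    and nin: "\<not> (p \<in> Iset V c \<and> q \<in> Iset V c)" and k: "k \<in> subtree n V c"
  shows "h k p q = 0"
proof -
  have C: "c < j" "j \<in> Iset V c" using children_props[OF fil c] by auto
  have kc: "k \<le> c" using subtree_le[OF fil k] .
  have pn: "p < n \<and> j \<le> p" if "p \<in> Iplus V j" for p using that j unfolding Iplus_def by (auto dest: Iset_lt)
  have z: "\<forall>t. \<bar>t\<bar> < \<epsilon> \<longrightarrow> L t $$ (r,k) = 0" if r: "r \<in> Iplus V j" "r \<notin> Iset V c" for r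
  proof (intro allI impI)
    fix t assume t: "\<bar>t\<bar> < \<epsilon>"
    have "(r,k) \<notin> V"
    proof
      assume "(r,k) \<in> V"
      then have "r \<in> Iset V k" using pn[OF r(1)] kc C unfolding Iset_def by auto
      then have "r \<in> Iset V c" using anc_Iset[OF fil k] pn[OF r(1)] C by auto
      then show False using r by simp
    qed
    then show "L t $$ (r,k) = 0" using Lnear_zero[OF _ _ _ _ t, of r k] pn[OF r(1)] kc C j by auto
  qed
  have A: "(\<forall>t. \<bar>t\<bar> < \<epsilon> \<longrightarrow> L t $$ (p,k) = 0) \<or> (\<forall>t. \<bar>t\<bar> < \<epsilon> \<longrightarrow> L t $$ (q,k) = 0)"
    using nin z p q by blast
  have "p < n" "q < n" "k < n" using pn p q kc C j by auto
  then show ?thesis by (intro h_zero[OF A])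
qed

lemma Y_row:
  assumes j: "j < n" and q: "q < n"
  shows "Y $$ (j,q) = h j j q + (\<Sum>k\<in>subtree n V j - {j}. h k j q)"
proof -
  have T: "subtree n V j \<subseteq> {..<n}" using subtree_le[OF fil] j by fastforce
  have "Y $$ (j,q) = (\<Sum>k<n. h k j q)" using Y_sum[OF j q] .
  also have "\<dots> = (\<Sum>k\<in>subtree n V j. h k j q)"
  proof (rule sum.mono_neutral_right)
    show "\<forall>k\<in>{..<n} - subtree n V j. h k j q = 0"
    proof
      fix k assume k: "k \<in> {..<n} - subtree n V j"
      have kj: "k \<noteq> j" using k j_in_subtree by auto
      have "j < k \<or> (j,k) \<notin> V" using desc[OF fil, of j k] k kj by auto
      then have "\<forall>t. \<bar>t\<bar> < \<epsilon> \<longrightarrow> L t $$ (j,k) = 0" using Lnear_zero[of j k] j k kj by auto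
      then show "h k j q = 0" by (rule h_zero[OF disjI1]) (use j q k in auto)
    qed
  qed (use T in auto)
  also have "\<dots> = h j j q + (\<Sum>k\<in>subtree n V j - {j}. h k j q)"
    by (rule sum.remove) (auto simp: subtree_finite[OF fil] j_in_subtree)
  finally show ?thesis .
qed

end



context ldl begin

lemma Ysym: "p < n \<Longrightarrow> q < n \<Longrightarrow> Y $$ (q,p) = Y $$ (p,q)"
proof -
  assume p: "p < n" and q: "q < n"
  have "transpose_mat Y = Y" using Ysv unfolding in_SV_def by simp
  then have "transpose_mat Y $$ (q,p) = Y $$ (q,p)" by simp
  then show ?thesis using XYc p q by simp
qed

lemma dU_dim: "dim_row (mderiv0 (Umat n V L D i)) = card (Iset V i)" "dim_col (mderiv0 (Umat n V L D i)) = card (Iset V i)"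
  unfolding mderiv0_def using Umat_dim by auto

lemma main_eq:
  assumes j: "j < n"
  shows "four_block_mat (subm Y {j} {j}) (transpose_mat (subm Y (Iset V j) {j}))
                     (subm Y (Iset V j) {j}) (0\<^sub>m (card (Iset V j)) (card (Iset V j)))
      + msum (card (Iplus V j)) (children n V j)
          (\<lambda>i. Emat (Iplus V j) (Iset V i) * mderiv0 (Umat n V L D i)
                 * transpose_mat (Emat (Iplus V j) (Iset V i)))
      = four_block_mat (1\<^sub>m 1) (0\<^sub>m 1 (card (Iset V j)))
                       (subm (L 0) (Iset V j) {j}) (1\<^sub>m (card (Iset V j)))
        * four_block_mat (subm (mderiv0 D) {j} {j})
                         ((D 0 $$ (j,j)) \<cdot>\<^sub>m transpose_mat (subm (mderiv0 L) (Iset V j) {j}))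
                         ((D 0 $$ (j,j)) \<cdot>\<^sub>m subm (mderiv0 L) (Iset V j) {j})
                         (mderiv0 (Umat n V L D j))
        * four_block_mat (1\<^sub>m 1) (transpose_mat (subm (L 0) (Iset V j) {j}))
                         (0\<^sub>m (card (Iset V j)) 1) (1\<^sub>m (card (Iset V j)))"
    (is "?LHS = ?RHS")
proof -
  have fI: "finite (Iset V j)" using Iset_finite[OF fil] .
  have gt: "\<forall>s\<in>Iset V j. j < s" using Iset_lt by blast
  have Ipd: "Iplus V j = insert j (Iset V j)" unfolding Iplus_def by simp
  have fIp: "finite (Iplus V j)" using fI Ipd by simp
  have cIp: "card (Iplus V j) = Suc (card (Iset V j))" using idx_insert_min(3)[OF fI gt] Ipd by simp
  have idx0: "idx (Iplus V j) 0 = j" using idx_insert_min(1)[OF fI gt] Ipd by simp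
  have idxS: "idx (Iplus V j) (Suc a) = idx (Iset V j) a" for a using idx_insert_min(2)[OF fI gt] Ipd by simp
  have Ipn: "p \<in> Iplus V j \<Longrightarrow> p < n" for p using j Ipd Iset_lt by auto
  have In: "a < card (Iset V j) \<Longrightarrow> idx (Iset V j) a < n" for a using idx_in[OF fI] Iset_lt by blast
  have pIp: "a < Suc (card (Iset V j)) \<Longrightarrow> idx (Iplus V j) a \<in> Iplus V j" for a using idx_in[OF fIp] cIp by simp
  let ?m = "card (Iset V j)"
  have cl: "subm (L 0) (Iset V j) {j} \<in> carrier_mat ?m 1" unfolding subm_def by simp
  have cl': "subm (mderiv0 L) (Iset V j) {j} \<in> carrier_mat ?m 1" unfolding subm_def by simp
  have cDm: "subm (mderiv0 D) {j} {j} \<in> carrier_mat 1 1" unfolding subm_def by simp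
  have cU: "mderiv0 (Umat n V L D j) \<in> carrier_mat ?m ?m" using dU_dim unfolding carrier_mat_def by blast
  have dimR: "dim_row ?RHS = Suc ?m" "dim_col ?RHS = Suc ?m" by simp_all
  have dimL: "dim_row ?LHS = Suc ?m" "dim_col ?LHS = Suc ?m" unfolding msum_def using cIp by simp_all
  have Tsplit: "(\<Sum>k\<in>subtree n V j. h k p q) = h j p q + (\<Sum>k\<in>subtree n V j - {j}. h k p q)" for p q
    by (rule sum.remove) (auto simp: subtree_finite[OF fil] j_in_subtree)
  show ?thesis
  proof (rule eq_matI)
    show "dim_row ?LHS = dim_row ?RHS" "dim_col ?LHS = dim_col ?RHS" using dimL dimR by simp_all
    fix a b assume a': "a < dim_row ?RHS" and b': "b < dim_col ?RHS"
    then have a: "a < Suc ?m" and b: "b < Suc ?m" using dimR by simp_all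
    define p where "p = idx (Iplus V j) a"
    define q where "q = idx (Iplus V j) b"
    have pI: "p \<in> Iplus V j" "q \<in> Iplus V j" using pIp a b unfolding p_def q_def by auto
    have pn: "p < n" "q < n" using Ipn pI by auto
    have pa: "0 < a \<Longrightarrow> idx (Iset V j) (a - 1) = p" using idxS[of "a - 1"] unfolding p_def by simp
    have qb: "0 < b \<Longrightarrow> idx (Iset V j) (b - 1) = q" using idxS[of "b - 1"] unfolding q_def by simp
    have pa0: "a = 0 \<Longrightarrow> p = j" using idx0 unfolding p_def by simp
    have qb0: "b = 0 \<Longrightarrow> q = j" using idx0 unfolding q_def by simp
    have e0: "(if a = 0 then 1 else subm (L 0) (Iset V j) {j} $$ (a-1,0)) = L 0 $$ (p,j)"
      using pa pa0 L0jj[OF j] a unfolding subm_def by auto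
    have e0b: "(if b = 0 then 1 else subm (L 0) (Iset V j) {j} $$ (b-1,0)) = L 0 $$ (q,j)"
      using qb qb0 L0jj[OF j] b unfolding subm_def by auto
    have e1: "(if a = 0 then 0 else subm (mderiv0 L) (Iset V j) {j} $$ (a-1,0)) = dL p j"
      using pa pa0 dLjj[OF j] a mdL[OF _ j] pn unfolding subm_def by auto
    have e1b: "(if b = 0 then 0 else subm (mderiv0 L) (Iset V j) {j} $$ (b-1,0)) = dL q j"
      using qb qb0 dLjj[OF j] b mdL[OF _ j] pn unfolding subm_def by auto
    have eD: "subm (mderiv0 D) {j} {j} $$ (0,0) = dD j" using mdD[OF j] unfolding subm_def by simp
    have eU: "(if 0 < a \<and> 0 < b then mderiv0 (Umat n V L D j) $$ (a-1,b-1) else 0)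
        = (if 0 < a \<and> 0 < b then - (\<Sum>k\<in>subtree n V j. h k p q) else 0)"
      using dU(1)[OF j, of "a-1" "b-1"] pa qb a b by auto
    have R: "?RHS $$ (a,b) = h j p q + (if 0 < a \<and> 0 < b then - (\<Sum>k\<in>subtree n V j. h k p q) else 0)"
      unfolding block_rhs[OF cl cl' cDm cU a b] e0 e0b e1 e1b eD eU h_def by simp
    have cz: "(if p \<in> Iset V c \<and> q \<in> Iset V c then - (\<Sum>k\<in>subtree n V c. h k p q) else 0)
        = - (\<Sum>k\<in>subtree n V c. h k p q)" if c: "c \<in> children n V j" for c
    proof (cases "p \<in> Iset V c \<and> q \<in> Iset V c")
      case True then show ?thesis by simp
    next
      case False
      have "(\<Sum>k\<in>subtree n V c. h k p q) = 0"
        by (rule sum.neutral) (use child_zero[OF j c pI False] in blast)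
      then show ?thesis using False by simp
    qed
    have EU: "(Emat (Iplus V j) (Iset V c) * mderiv0 (Umat n V L D c) * transpose_mat (Emat (Iplus V j) (Iset V c))) $$ (a,b)
        = - (\<Sum>k\<in>subtree n V c. h k p q)" if c: "c \<in> children n V j" for c
    proof -
      have cn: "c < n" using children_props[OF fil c] j by simp
      have "(Emat (Iplus V j) (Iset V c) * mderiv0 (Umat n V L D c) * transpose_mat (Emat (Iplus V j) (Iset V c))) $$ (a,b)
         = (if p \<in> Iset V c \<and> q \<in> Iset V c then - (\<Sum>k\<in>subtree n V c. h k p q) else 0)"
        unfolding p_def q_def
      proof (rule EUE)
        show "finite (Iset V c)" using Iset_finite[OF fil] .
        show "mderiv0 (Umat n V L D c) \<in> carrier_mat (card (Iset V c)) (card (Iset V c))"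
          using dU_dim unfolding carrier_mat_def by blast
        show "\<And>x y. x < card (Iset V c) \<Longrightarrow> y < card (Iset V c) \<Longrightarrow> mderiv0 (Umat n V L D c) $$ (x,y)
            = - (\<Sum>k\<in>subtree n V c. h k (idx (Iset V c) x) (idx (Iset V c) y))"
          by (rule dU(1)[OF cn])
        show "a < card (Iplus V j)" "b < card (Iplus V j)" using a b cIp by simp_all
      qed
      then show ?thesis using cz[OF c] by simp
    qed
    have M: "msum (card (Iplus V j)) (children n V j)
          (\<lambda>i. Emat (Iplus V j) (Iset V i) * mderiv0 (Umat n V L D i)
                 * transpose_mat (Emat (Iplus V j) (Iset V i))) $$ (a,b)
        = - (\<Sum>k\<in>subtree n V j - {j}. h k p q)"
    proof -
      have "msum (card (Iplus V j)) (children n V j)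
          (\<lambda>i. Emat (Iplus V j) (Iset V i) * mderiv0 (Umat n V L D i)
                 * transpose_mat (Emat (Iplus V j) (Iset V i))) $$ (a,b)
         = (\<Sum>c\<in>children n V j. - (\<Sum>k\<in>subtree n V c. h k p q))"
        unfolding msum_def using a b cIp EU by (auto intro!: sum.cong)
      also have "\<dots> = - (\<Sum>k\<in>subtree n V j - {j}. h k p q)"
        by (simp add: sum_subtree[OF fil] sum_negf)
      finally show ?thesis .
    qed
    have Yb: "four_block_mat (subm Y {j} {j}) (transpose_mat (subm Y (Iset V j) {j}))
                     (subm Y (Iset V j) {j}) (0\<^sub>m ?m ?m) $$ (a,b)
        = (if a = 0 \<and> b = 0 then Y $$ (j,j) else if a = 0 then Y $$ (q,j) else if b = 0 then Y $$ (p,j) else 0)"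
      using a b pa qb unfolding subm_def by auto
    have Lft: "?LHS $$ (a,b) = (if a = 0 \<and> b = 0 then Y $$ (j,j) else if a = 0 then Y $$ (q,j) else if b = 0 then Y $$ (p,j) else 0)
        - (\<Sum>k\<in>subtree n V j - {j}. h k p q)"
    proof -
      have "?LHS $$ (a,b) = four_block_mat (subm Y {j} {j}) (transpose_mat (subm Y (Iset V j) {j}))
                     (subm Y (Iset V j) {j}) (0\<^sub>m ?m ?m) $$ (a,b) + msum (card (Iplus V j)) (children n V j)
          (\<lambda>i. Emat (Iplus V j) (Iset V i) * mderiv0 (Umat n V L D i)
                 * transpose_mat (Emat (Iplus V j) (Iset V i))) $$ (a,b)"
        by (rule index_add_mat(1)) (use a b cIp in \<open>simp_all add: msum_def\<close>)
      then show ?thesis unfolding Yb M by simp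
    qed
    let ?S = "\<lambda>x y. (\<Sum>k\<in>subtree n V j - {j}. h k x y)"
    show "?LHS $$ (a,b) = ?RHS $$ (a,b)"
    proof (cases "a = 0")
      case True
      then have pj: "p = j" using pa0 by simp
      show ?thesis
      proof (cases "b = 0")
        case True
        then have qj: "q = j" using qb0 by simp
        have l: "?LHS $$ (a,b) = Y $$ (j,j) - ?S p q" using Lft \<open>a = 0\<close> True by simp
        have r: "?RHS $$ (a,b) = h j p q" using R \<open>a = 0\<close> by simp
        show ?thesis unfolding l r pj qj Y_row[OF j j] by simp
      next
        case False
        have l: "?LHS $$ (a,b) = Y $$ (q,j) - ?S p q" using Lft \<open>a = 0\<close> False by simp
        have r: "?RHS $$ (a,b) = h j p q" using R \<open>a = 0\<close> by simp
        show ?thesis unfolding l r pj Ysym[OF j pn(2)] Y_row[OF j pn(2)] by simp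
      qed
    next
      case False
      show ?thesis
      proof (cases "b = 0")
        case True
        then have qj: "q = j" using qb0 by simp
        have l: "?LHS $$ (a,b) = Y $$ (p,j) - ?S p q" using Lft \<open>a \<noteq> 0\<close> True by simp
        have r: "?RHS $$ (a,b) = h j p q" using R True by simp
        have hs: "?S j p = ?S p j" using h_sym by simp
        show ?thesis unfolding l r qj Ysym[OF j pn(1)] Y_row[OF j pn(1)] hs h_sym[of j j p] by simp
      next
        case False
        have l: "?LHS $$ (a,b) = - ?S p q" using Lft \<open>a \<noteq> 0\<close> False by simp
        have r: "?RHS $$ (a,b) = h j p q - (\<Sum>k\<in>subtree n V j. h k p q)" using R \<open>a \<noteq> 0\<close> False by simp
        show ?thesis unfolding l r Tsplit[of p q] by simp
      qed
    qed
  qed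
qed

end

theorem mainTheorem5:
  fixes n :: nat and V :: "(nat \<times> nat) set" and X Y :: "real mat"
    and L D :: "real \<Rightarrow> real mat" and \<epsilon> :: real
  assumes "filled n V"
    and "in_SV n V X" and "pos_def n X" and "in_SV n V Y"
    and "\<epsilon> > 0"
    and "\<And>t. \<bar>t\<bar> < \<epsilon> \<Longrightarrow> unit_lower_tri n (L t) \<and> pos_diag n (D t) \<and>
                         X + t \<cdot>\<^sub>m Y = L t * D t * transpose_mat (L t)"
  shows "(\<forall>a<n. \<forall>b<n. (\<lambda>t. L t $$ (a,b)) differentiable (at 0)
                   \<and> (\<lambda>t. D t $$ (a,b)) differentiable (at 0)) \<and>
    (\<forall>j<n.
      four_block_mat (subm Y {j} {j}) (transpose_mat (subm Y (Iset V j) {j}))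
                     (subm Y (Iset V j) {j}) (0\<^sub>m (card (Iset V j)) (card (Iset V j)))
      + msum (card (Iplus V j)) (children n V j)
          (\<lambda>i. Emat (Iplus V j) (Iset V i) * mderiv0 (Umat n V L D i)
                 * transpose_mat (Emat (Iplus V j) (Iset V i)))
      = four_block_mat (1\<^sub>m 1) (0\<^sub>m 1 (card (Iset V j)))
                       (subm (L 0) (Iset V j) {j}) (1\<^sub>m (card (Iset V j)))
        * four_block_mat (subm (mderiv0 D) {j} {j})
                         ((D 0 $$ (j,j)) \<cdot>\<^sub>m transpose_mat (subm (mderiv0 L) (Iset V j) {j}))
                         ((D 0 $$ (j,j)) \<cdot>\<^sub>m subm (mderiv0 L) (Iset V j) {j})
                         (mderiv0 (Umat n V L D j))
        * four_block_mat (1\<^sub>m 1) (transpose_mat (subm (L 0) (Iset V j) {j}))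
                         (0\<^sub>m (card (Iset V j)) 1) (1\<^sub>m (card (Iset V j))))"
proof -
  interpret ldl n V X Y L D \<epsilon>
    by (rule ldl.intro) (use assms in auto)
  show ?thesis using diffL diffD main_eq by blast
qed


end
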